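(* For $B',B\in\mathcal X_{N-2}$ such that $B'\preceq B$ we have $\varphi(B')\le\varphi(B)$.
   Context: Let $N\ge 3$ be an odd integer and $F=\mathbb Z/2\mathbb Z$. For integers $i,j$ let $[i,j]=\{h\in\mathbb Z: i\le h\le j\}$ (empty if $i>j$). Let $S_N=[1,N]$. The set of all subsets of $S_N$ is an $F$-vector space with sum $X+X'=(X\cup X')-(X\cap X')$; let $E_N$ be the subspace of subsets of even cardinality. A $2$-element subset $\{i,j\}\subseteq S_N$ is written $ij$ when either ($i<j$ and $j-i$ odd) or ($i>j$ and $i-j$ even); each $2$-element subset has exactly one such writing. Let $\mathcal P_N$ be the set of all finite sets $B$ of pairwise disjoint $2$-element subsets of $S_N$; for $B\in\mathcal P_N$ let $\langle B\rangle$ be the $F$-subspace of $E_N$ spanned by the elements of $B$, $\mathrm{supp}(B)=\bigcup_{X\in B}X$, $B^0=\{\{i,j\}\in B: i-j\text{ even}\}$, $B^1=\{\{i,j\}\in B: i-j\text{ odd}\}$. A set $X\subseteq S_N$ is $0$-covered (resp. $1$-covered) by $B^1$ if there are $a_1b_1,\dots,a_sb_s\in B^1$ ($s\ge 0$, so $a_r<b_r$) with $X=[a_1,b_1]\sqcup\dots\sqcup[a_s,b_s]$ (resp. $X=[a_1,b_1]\sqcup\dots\sqcup[a_s,b_s]\sqcup\{u\}$ for some $u$), disjoint unions. Let ${}^*\mathcal P_N$ be the set of $B\in\mathcal P_N$ such that: for every $ij\in B^1$ the set $[i+1,j-1]$ is $0$-covered by $B^1$; and there is a sequence $i_*(B)=(i_1,\dots,i_{2s})$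 in $S_N$ with $B^0=\{i_{2s}i_1,i_{2s-1}i_2,\dots,i_{s+1}i_s\}$ (so $s=|B^0|$; the sequence is unique) such that, if $s\ge1$, each of $[i_1+1,i_2-1],\dots,[i_{s-1}+1,i_s-1],[i_{s+1}+1,i_{s+2}-1],\dots,[i_{2s-1}+1,i_{2s}-1]$ is $0$-covered by $B^1$. For $B\in{}^*\mathcal P_N$ with $i_*(B)=(i_1,\dots,i_{2s})$ consider: (I) $s=0$, or $s\ge1$ and $[1,i_1-1]$ and $[i_{2s}+1,N]$ are $0$-covered by $B^1$; (II) $N\notin\mathrm{supp}(B)$ and either $s=0$, or $s$ is odd and either (i) $[1,i_1-1]$ is $1$-covered and $[i_{2s}+1,N-1]$ is $0$-covered by $B^1$, or (ii) $[1,i_1-1]$ is $0$-covered and $[i_{2s}+1,N-1]$ is $1$-covered by $B^1$; (III) (I) holds and, if $s$ is even then $\{i,N\}\in B$ for some even $i$, if $s$ is odd then $\{i,N\}\in B$ for some odd $i$. Let $\mathcal X_{N-1}$, $\mathcal X^+_{N-2}$, $\mathcal X^-_{N-2}$ be the sets of $B\in{}^*\mathcal P_N$ satisfying (I), (II), (III) respectively, and $\mathcal X_{N-2}=\mathcal X^+_{N-2}\sqcup\mathcal X^-_{N-2}$. For $B\in\mathcal X^+_{N-2}$ with $s\ge1$ there is a unique $u_B$: in case (i), $u_B\in[1,i_1-1]$ with $[1,u_B-1]$, $[u_B+1,i_1-1]$ $0$-covered by $B^1$ ($u_B$ odd); in case (ii), $u_B\in[i_{2s}+1,N-1]$ with $[i_{2s}+1,u_B-1]$,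 $[u_B+1,N-1]$ $0$-covered by $B^1$ ($u_B$ even). Put $[[ij]]=[i,j]$ if $i<j$ and $[[ij]]=[i,N]\cup[1,j]$ if $i>j$. For $B\in\mathcal X_{N-1}$ let $\epsilon(B)=\sum_{ij\in B}[[ij]]\in E_N$. For $B\in\mathcal X_{N-2}$ define ${}'\epsilon(B)\in E_N$: ${}'\epsilon(B)=\sum_{ij\in B}[[ij]]$ if $B\in\mathcal X^-_{N-2}$ or if $B\in\mathcal X^+_{N-2}$ with $|B^0|=0$; ${}'\epsilon(B)=\sum_{ij\in B}[[ij]]+[u_B,N]$ if $B\in\mathcal X^+_{N-2}$, $|B^0|$ odd, $u_B$ even; ${}'\epsilon(B)=\sum_{ij\in B}[[ij]]+\{N\}+[1,u_B]$ if $B\in\mathcal X^+_{N-2}$, $|B^0|$ odd, $u_B$ odd. The map $\varphi:\mathcal X_{N-2}\to\mathcal X_{N-1}$ (a bijection) is given by $\varphi(B)=B$ if $B\in\mathcal X^-_{N-2}$ or if $B\in\mathcal X^+_{N-2}$ with $|B^0|=0$, and $\varphi(B)=B\sqcup\{\{u_B,N\}\}$ if $B\in\mathcal X^+_{N-2}$ with $|B^0|>0$. For $B,B'\in\mathcal X_{N-2}$ write $B'\preceq B$ if there is a sequence $B'=B_0,\dots,B_h=B$ ($h\ge0$) in $\mathcal X_{N-2}$ with ${}'\epsilon(B_k)\in\langle B_{k+1}\rangle$ for $k=0,\dots,h-1$. For $B,B'\in\mathcal X_{N-1}$ write $B'\le B$ if there is a sequence $B'=B_0,\dots,B_h=B$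 ($h\ge0$) in $\mathcal X_{N-1}$ with $\epsilon(B_k)\in\langle B_{k+1}\rangle$ for $k=0,\dots,h-1$. *)

theory Defs
  imports Main
begin

text \<open>Sum in the F_2-vector space of subsets: symmetric difference.\<close>
definition sdiff2 :: "nat set \<Rightarrow> nat set \<Rightarrow> nat set" where
  "sdiff2 X Y = (X - Y) \<union> (Y - X)"

text \<open>Finite sum over F_2 of the family f indexed by the finite set C.\<close>
definition fsum2 :: "('a \<Rightarrow> nat set) \<Rightarrow> 'a set \<Rightarrow> nat set" where
  "fsum2 f C = {x. odd (card {p \<in> C. x \<in> f p})}"

definition span2 :: "nat set set \<Rightarrow> nat set set" where
  "span2 B = {fsum2 id C | C. C \<subseteq> B}"

definition PN :: "nat \<Rightarrow> nat set set \<Rightarrow> bool" where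
  "PN N B \<longleftrightarrow> (\<forall>p\<in>B. p \<subseteq> {1..N} \<and> card p = 2) \<and>
     (\<forall>p\<in>B. \<forall>q\<in>B. p \<noteq> q \<longrightarrow> p \<inter> q = {})"

definition supp :: "nat set set \<Rightarrow> nat set" where
  "supp B = \<Union>B"

definition B0 :: "nat set set \<Rightarrow> nat set set" where
  "B0 B = {p \<in> B. even (Max p - Min p)}"

definition B1 :: "nat set set \<Rightarrow> nat set set" where
  "B1 B = {p \<in> B. odd (Max p - Min p)}"

definition ival :: "nat set \<Rightarrow> nat set" where
  "ival p = {Min p..Max p}"

definition cov0 :: "nat set set \<Rightarrow> nat set \<Rightarrow> bool" where
  "cov0 B X \<longleftrightarrow> (\<exists>C \<subseteq> B1 B.
     (\<forall>p\<in>C. \<forall>q\<in>C. p \<noteq> q \<longrightarrow> ival p \<inter> ival q = {}) \<and> X = \<Union>(ival ` C))"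

definition cov1 :: "nat set set \<Rightarrow> nat set \<Rightarrow> bool" where
  "cov1 B X \<longleftrightarrow> (\<exists>C \<subseteq> B1 B. \<exists>u.
     (\<forall>p\<in>C. \<forall>q\<in>C. p \<noteq> q \<longrightarrow> ival p \<inter> ival q = {}) \<and>
     u \<notin> \<Union>(ival ` C) \<and> X = insert u (\<Union>(ival ` C)))"

text \<open>The sequence i_*(B) = (i_1,...,i_{2s}) as a 0-indexed list is; entry i_k is is!(k-1).
  B^0 = {i_{2s} i_1, ..., i_{s+1} i_s}; the sequence is taken strictly increasing.\<close>
definition seq_ok :: "nat \<Rightarrow> nat set set \<Rightarrow> nat list \<Rightarrow> bool" where
  "seq_ok N B is \<longleftrightarrow> even (length is) \<and> sorted_wrt (<) is \<and> set is \<subseteq> {1..N} \<and>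
     B0 B = {{is ! (length is - 1 - k), is ! k} | k. k < length is div 2} \<and>
     (\<forall>k. k + 1 < length is div 2 \<longrightarrow> cov0 B {is ! k + 1 .. is ! (k + 1) - 1}) \<and>
     (\<forall>k. length is div 2 \<le> k \<and> k + 1 < length is \<longrightarrow>
          cov0 B {is ! k + 1 .. is ! (k + 1) - 1})"

definition istar :: "nat \<Rightarrow> nat set set \<Rightarrow> nat list" where
  "istar N B = (THE is. seq_ok N B is)"

definition starP :: "nat \<Rightarrow> nat set set \<Rightarrow> bool" where
  "starP N B \<longleftrightarrow> PN N B \<and> (\<forall>p\<in>B1 B. cov0 B {Min p + 1 .. Max p - 1}) \<and>
     (\<exists>is. seq_ok N B is)"

abbreviation sB :: "nat \<Rightarrow> nat set set \<Rightarrow> nat" where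
  "sB N B \<equiv> length (istar N B) div 2"

abbreviation ifirst :: "nat \<Rightarrow> nat set set \<Rightarrow> nat" where
  "ifirst N B \<equiv> hd (istar N B)"

abbreviation ilast :: "nat \<Rightarrow> nat set set \<Rightarrow> nat" where
  "ilast N B \<equiv> last (istar N B)"

definition condI :: "nat \<Rightarrow> nat set set \<Rightarrow> bool" where
  "condI N B \<longleftrightarrow> sB N B = 0 \<or>
     (cov0 B {1 .. ifirst N B - 1} \<and> cov0 B {ilast N B + 1 .. N})"

definition caseI :: "nat \<Rightarrow> nat set set \<Rightarrow> bool" where
  "caseI N B \<longleftrightarrow> cov1 B {1 .. ifirst N B - 1} \<and> cov0 B {ilast N B + 1 .. N - 1}"

definition caseII :: "nat \<Rightarrow> nat set set \<Rightarrow> bool" where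
  "caseII N B \<longleftrightarrow> cov0 B {1 .. ifirst N B - 1} \<and> cov1 B {ilast N B + 1 .. N - 1}"

definition condII :: "nat \<Rightarrow> nat set set \<Rightarrow> bool" where
  "condII N B \<longleftrightarrow> N \<notin> supp B \<and>
     (sB N B = 0 \<or> (odd (sB N B) \<and> (caseI N B \<or> caseII N B)))"

definition condIII :: "nat \<Rightarrow> nat set set \<Rightarrow> bool" where
  "condIII N B \<longleftrightarrow> condI N B \<and>
     (even (sB N B) \<longrightarrow> (\<exists>i. even i \<and> {i, N} \<in> B)) \<and>
     (odd (sB N B) \<longrightarrow> (\<exists>i. odd i \<and> {i, N} \<in> B))"

definition XN1 :: "nat \<Rightarrow> nat set set set" where
  "XN1 N = {B. starP N B \<and> condI N B}"

definition XN2p :: "nat \<Rightarrow> nat set set set" where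
  "XN2p N = {B. starP N B \<and> condII N B}"

definition XN2m :: "nat \<Rightarrow> nat set set set" where
  "XN2m N = {B. starP N B \<and> condIII N B}"

definition XN2 :: "nat \<Rightarrow> nat set set set" where
  "XN2 N = XN2p N \<union> XN2m N"

definition uB :: "nat \<Rightarrow> nat set set \<Rightarrow> nat" where
  "uB N B = (if caseI N B then
       (THE u. u \<in> {1 .. ifirst N B - 1} \<and> cov0 B {1 .. u - 1} \<and>
               cov0 B {u + 1 .. ifirst N B - 1})
     else
       (THE u. u \<in> {ilast N B + 1 .. N - 1} \<and> cov0 B {ilast N B + 1 .. u - 1} \<and>
               cov0 B {u + 1 .. N - 1}))"

definition brk :: "nat \<Rightarrow> nat set \<Rightarrow> nat set" where
  "brk N p = (if odd (Max p - Min p) then {Min p .. Max p}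
              else {Max p .. N} \<union> {1 .. Min p})"

definition eps :: "nat \<Rightarrow> nat set set \<Rightarrow> nat set" where
  "eps N B = fsum2 (brk N) B"

definition eps' :: "nat \<Rightarrow> nat set set \<Rightarrow> nat set" where
  "eps' N B = (if B \<in> XN2m N \<or> card (B0 B) = 0 then eps N B
     else if even (uB N B) then sdiff2 (eps N B) {uB N B .. N}
     else sdiff2 (sdiff2 (eps N B) {N}) {1 .. uB N B})"

definition phi :: "nat \<Rightarrow> nat set set \<Rightarrow> nat set set" where
  "phi N B = (if B \<in> XN2m N \<or> card (B0 B) = 0 then B else insert {uB N B, N} B)"

definition preceq :: "nat \<Rightarrow> nat set set \<Rightarrow> nat set set \<Rightarrow> bool" where
  "preceq N B' B \<longleftrightarrow>
     (\<lambda>X Y. X \<in> XN2 N \<and> Y \<in> XN2 N \<and> eps' N X \<in> span2 Y)\<^sup>*\<^sup>* B' B"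

definition leq1 :: "nat \<Rightarrow> nat set set \<Rightarrow> nat set set \<Rightarrow> bool" where
  "leq1 N B' B \<longleftrightarrow>
     (\<lambda>X Y. X \<in> XN1 N \<and> Y \<in> XN1 N \<and> eps N X \<in> span2 Y)\<^sup>*\<^sup>* B' B"

end

theory Submission
  imports Defs
begin

lemma PN_finite: "PN N B \<Longrightarrow> finite B"
proof -
  assume "PN N B"
  then have "B \<subseteq> Pow {1..N}" unfolding PN_def by auto
  then show ?thesis by (rule finite_subset) simp
qed

lemma pair_props:
  assumes "PN N B" "p \<in> B"
  shows "finite p \<and> Min p < Max p \<and> Min p \<in> p \<and> Max p \<in> p \<and> (\<forall>x\<in>p. x = Min p \<or> x = Max p) \<and> 1 \<le> Min p \<and> Max p \<le> N"
proof -
  have "card p = 2" "p \<subseteq> {1..N}" using assms unfolding PN_def by auto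
  then obtain a b where ab: "a \<noteq> b" "p = {a,b}" by (meson card_2_iff)
  show ?thesis
  proof (cases "a < b")
    case True
    then have "Min p = a" "Max p = b" using ab by auto
    then show ?thesis using ab True \<open>p \<subseteq> {1..N}\<close> by auto
  next
    case False
    then have "b < a" using ab by auto
    then have "Min p = b" "Max p = a" using ab by auto
    then show ?thesis using ab \<open>b < a\<close> \<open>p \<subseteq> {1..N}\<close> by auto
  qed
qed

lemma PN_disj: "PN N B \<Longrightarrow> p \<in> B \<Longrightarrow> q \<in> B \<Longrightarrow> x \<in> p \<Longrightarrow> x \<in> q \<Longrightarrow> p = q"
  unfolding PN_def by blast

lemma B1_sub: "B1 B \<subseteq> B" unfolding B1_def by auto
lemma B0_sub: "B0 B \<subseteq> B" unfolding B0_def by auto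

lemma B0_B1_clash: "PN N B \<Longrightarrow> P \<in> B0 B \<Longrightarrow> r \<in> B1 B \<Longrightarrow> x \<in> P \<Longrightarrow> x \<in> r \<Longrightarrow> False"
proof -
  assume a: "PN N B" "P \<in> B0 B" "r \<in> B1 B" "x \<in> P" "x \<in> r"
  then have "P = r" using PN_disj[of N B P r x] B0_sub B1_sub by blast
  then show False using a unfolding B0_def B1_def by auto
qed

lemma cov0_mono: "B \<subseteq> B' \<Longrightarrow> cov0 B X \<Longrightarrow> cov0 B' X"
proof -
  assume "B \<subseteq> B'" "cov0 B X"
  moreover have "B1 B \<subseteq> B1 B'" using \<open>B \<subseteq> B'\<close> unfolding B1_def by auto
  ultimately show ?thesis unfolding cov0_def by (metis (no_types, lifting) subset_trans)
qed

lemma cov0_empty: "cov0 B {}"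
  unfolding cov0_def by (rule exI[of _ "{}"]) auto

lemma cov0_ival: "p \<in> B1 B \<Longrightarrow> cov0 B (ival p)"
  unfolding cov0_def by (rule exI[of _ "{p}"]) auto

lemma cov0_union:
  assumes "PN N B" "cov0 B X" "cov0 B Y" "X \<inter> Y = {}"
  shows "cov0 B (X \<union> Y)"
proof -
  obtain C1 where C1: "C1 \<subseteq> B1 B" "\<forall>p\<in>C1. \<forall>q\<in>C1. p \<noteq> q \<longrightarrow> ival p \<inter> ival q = {}" "X = \<Union>(ival ` C1)"
    using assms(2) unfolding cov0_def by (elim exE conjE) (rule that)
  obtain C2 where C2: "C2 \<subseteq> B1 B" "\<forall>p\<in>C2. \<forall>q\<in>C2. p \<noteq> q \<longrightarrow> ival p \<inter> ival q = {}" "Y = \<Union>(ival ` C2)"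
    using assms(3) unfolding cov0_def by (elim exE conjE) (rule that)
  have ne: "ival p \<noteq> {}" if "p \<in> B1 B" for p
    using pair_props[OF assms(1), of p] that B1_sub unfolding ival_def by force
  have "\<forall>p\<in>C1 \<union> C2. \<forall>q\<in>C1 \<union> C2. p \<noteq> q \<longrightarrow> ival p \<inter> ival q = {}"
  proof (intro ballI impI)
    fix p q assume pq: "p \<in> C1 \<union> C2" "q \<in> C1 \<union> C2" "p \<noteq> q"
    show "ival p \<inter> ival q = {}"
    proof (cases "p \<in> C1")
      case True
      show ?thesis
      proof (cases "q \<in> C1")
        case True then show ?thesis using C1 pq \<open>p \<in> C1\<close> by blast
      next
        case False then have "q \<in> C2" using pq by auto
        then show ?thesis using \<open>p \<in> C1\<close> C1(3) C2(3) assms(4) by blast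
      qed
    next
      case False then have "p \<in> C2" using pq by auto
      show ?thesis
      proof (cases "q \<in> C2")
        case True then show ?thesis using C2 pq \<open>p \<in> C2\<close> by blast
      next
        case False then have "q \<in> C1" using pq by auto
        then show ?thesis using \<open>p \<in> C2\<close> C1(3) C2(3) assms(4) by blast
      qed
    qed
  qed
  then show ?thesis unfolding cov0_def using C1 C2
    by (intro exI[of _ "C1 \<union> C2"]) auto
qed

lemma cov0_even:
  assumes "PN N B" "cov0 B X"
  shows "even (card X)"
proof -
  obtain C where C: "C \<subseteq> B1 B" "\<forall>p\<in>C. \<forall>q\<in>C. p \<noteq> q \<longrightarrow> ival p \<inter> ival q = {}" "X = \<Union>(ival ` C)"
    using assms(2) unfolding cov0_def by (elim exE conjE) (rule that)
  have fin: "finite C" using finite_subset[OF subset_trans[OF C(1) B1_sub] PN_finite[OF assms(1)]] .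
  have "card (\<Union>(ival ` C)) = (\<Sum>p\<in>C. card (ival p))"
  proof (rule card_UN_disjoint[OF fin])
    show "\<forall>i\<in>C. finite (ival i)" unfolding ival_def by simp
    show "\<forall>i\<in>C. \<forall>j\<in>C. i \<noteq> j \<longrightarrow> ival i \<inter> ival j = {}" using C(2) by blast
  qed
  then have cX: "card X = (\<Sum>p\<in>C. card (ival p))" using C(3) by simp
  have "even (card (ival p))" if "p \<in> C" for p
  proof -
    have "p \<in> B1 B" using that C(1) by blast
    then have "odd (Max p - Min p)" "Min p < Max p" using pair_props[OF assms(1), of p] B1_sub
      unfolding B1_def by auto
    then show ?thesis unfolding ival_def by simp
  qed
  then have "even (\<Sum>p\<in>C. card (ival p))" by (simp add: dvd_sum)
  then show ?thesis using cX by simp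
qed

lemma cov0_covered:
  assumes "PN N B" "\<forall>p\<in>B1 B. cov0 B {Min p + 1 .. Max p - 1}"
  shows "cov0 B {x..y} \<Longrightarrow> z \<in> {x..y} \<Longrightarrow> \<exists>r\<in>B1 B. z \<in> r \<and> r \<subseteq> {x..y}"
proof (induction "y - x" arbitrary: x y rule: less_induct)
  case less
  obtain C where C: "C \<subseteq> B1 B" "\<forall>p\<in>C. \<forall>q\<in>C. p \<noteq> q \<longrightarrow> ival p \<inter> ival q = {}" "{x..y} = \<Union>(ival ` C)"
    using less.prems(1) unfolding cov0_def by (elim exE conjE) (rule that)
  have "z \<in> \<Union>(ival ` C)" using less.prems(2) unfolding C(3) .
  then obtain p where p: "p \<in> C" "z \<in> ival p" by blast
  have pB: "p \<in> B1 B" using p(1) C(1) by blast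
  have pp: "finite p" "Min p < Max p" "Min p \<in> p" "Max p \<in> p" "\<forall>x\<in>p. x = Min p \<or> x = Max p"
    using pair_props[OF assms(1), of p] pB B1_sub by auto
  have sub: "ival p \<subseteq> {x..y}" unfolding C(3) using p(1) by blast
  have "p \<subseteq> ival p" using pp(2,5) unfolding ival_def by auto
  then have psub: "p \<subseteq> {x..y}" using sub by (rule subset_trans)
  show ?case
  proof (cases "z \<in> p")
    case True then show ?thesis using pB psub by auto
  next
    case False
    have "z \<noteq> Min p" "z \<noteq> Max p" using False pp(3,4) by auto
    then have zi: "z \<in> {Min p + 1 .. Max p - 1}" using p(2) unfolding ival_def by auto
    have "Min p \<in> {x..y}" "Max p \<in> {x..y}" using psub pp(3,4) by auto
    then have "(Max p - 1) - (Min p + 1) < y - x" using zi by auto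
    moreover have cv: "cov0 B {Min p + 1 .. Max p - 1}" using assms(2) pB by blast
    ultimately obtain r where "r \<in> B1 B" "z \<in> r" "r \<subseteq> {Min p + 1 .. Max p - 1}"
      using less.hyps[of "Max p - 1" "Min p + 1"] zi by blast
    moreover have "{Min p + 1 .. Max p - 1} \<subseteq> ival p" unfolding ival_def by auto
    then have "{Min p + 1 .. Max p - 1} \<subseteq> {x..y}" using sub by (rule subset_trans)
    ultimately show ?thesis by (meson subset_trans)
  qed
qed

lemma cov0_closed:
  assumes "PN N B" "\<forall>p\<in>B1 B. cov0 B {Min p + 1 .. Max p - 1}"
    "cov0 B {x..y}" "z \<in> {x..y}" "p \<in> B" "z \<in> p"
  shows "p \<subseteq> {x..y}"
proof -
  obtain r where "r \<in> B1 B" "z \<in> r" "r \<subseteq> {x..y}" using cov0_covered[OF assms(1,2,3,4)] by blast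
  then have "r = p" using PN_disj[OF assms(1), of r p z] B1_sub assms by blast
  then show ?thesis using \<open>r \<subseteq> {x..y}\<close> by simp
qed


lemma seq_set:
  assumes "seq_ok N B is"
  shows "set is = \<Union>(B0 B)"
proof -
  let ?L = "length is"
  have ev: "even ?L" and B0eq: "B0 B = {{is ! (?L - 1 - k), is ! k} | k. k < ?L div 2}"
    using assms unfolding seq_ok_def by auto
  show ?thesis
  proof
    show "set is \<subseteq> \<Union>(B0 B)"
    proof
      fix x assume "x \<in> set is"
      then obtain i where i: "i < ?L" "x = is ! i" by (metis in_set_conv_nth)
      show "x \<in> \<Union>(B0 B)"
      proof (cases "i < ?L div 2")
        case True
        then have "{is ! (?L - 1 - i), is ! i} \<in> B0 B" using B0eq by blast
        then show ?thesis using i by blast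
      next
        case False
        define k where "k = ?L - 1 - i"
        have k: "k < ?L div 2" "?L - 1 - k = i" using False i ev unfolding k_def by auto
        then have "{is ! (?L - 1 - k), is ! k} \<in> B0 B" using B0eq by blast
        then show ?thesis using i k by auto
      qed
    qed
  next
    show "\<Union>(B0 B) \<subseteq> set is"
    proof
      fix x assume "x \<in> \<Union>(B0 B)"
      then obtain k where k: "k < ?L div 2" "x \<in> {is ! (?L - 1 - k), is ! k}" using B0eq by auto
      then show "x \<in> set is" by auto
    qed
  qed
qed

lemma seq_unique:
  assumes "seq_ok N B is1" "seq_ok N B is2"
  shows "is1 = is2"
proof -
  have "set is1 = set is2" using seq_set[OF assms(1)] seq_set[OF assms(2)] by simp
  moreover have "sorted_wrt (<) is1" "sorted_wrt (<) is2" using assms unfolding seq_ok_def by auto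
  ultimately show ?thesis using sorted_distinct_set_unique strict_sorted_iff by blast
qed

lemma istar_eq: "seq_ok N B is \<Longrightarrow> istar N B = is"
  unfolding istar_def using seq_unique by blast

lemma istar_ok: "starP N B \<Longrightarrow> seq_ok N B (istar N B)"
  unfolding starP_def using istar_eq by metis

lemma sB_card:
  assumes "starP N B"
  shows "card (B0 B) = 0 \<longleftrightarrow> sB N B = 0"
proof -
  have ok: "seq_ok N B (istar N B)" using istar_ok[OF assms] .
  have fin: "finite (B0 B)" using finite_subset[OF B0_sub PN_finite] assms unfolding starP_def by blast
  have "set (istar N B) = \<Union>(B0 B)" using seq_set[OF ok] .
  moreover have "even (length (istar N B))" using ok unfolding seq_ok_def by auto
  moreover have "\<forall>p\<in>B0 B. p \<noteq> {}"
  proof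
    fix p assume "p \<in> B0 B"
    then have "p \<in> B" using B0_sub by blast
    moreover have "PN N B" using assms unfolding starP_def by blast
    ultimately have "Min p \<in> p" using pair_props by blast
    then show "p \<noteq> {}" by blast
  qed
  ultimately show ?thesis using fin by auto
qed

lemma seq_bounds:
  assumes "seq_ok N B is" "is \<noteq> []"
  shows "hd is \<in> \<Union>(B0 B)" "last is \<in> \<Union>(B0 B)"
    "\<And>x. x \<in> \<Union>(B0 B) \<Longrightarrow> hd is \<le> x \<and> x \<le> last is"
proof -
  have st: "set is = \<Union>(B0 B)" using seq_set[OF assms(1)] .
  show "hd is \<in> \<Union>(B0 B)" "last is \<in> \<Union>(B0 B)" using st assms(2) by auto
  have so: "sorted_wrt (<) is" using assms unfolding seq_ok_def by auto
  fix x assume "x \<in> \<Union>(B0 B)"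
  then obtain i where i: "i < length is" "x = is ! i" using st by (metis in_set_conv_nth)
  have "is ! 0 \<le> is ! i" using sorted_wrt_nth_less[OF so, of 0 i] i by (cases i) auto
  moreover have "is ! i \<le> is ! (length is - 1)"
    using sorted_wrt_nth_less[OF so, of i "length is - 1"] i by (cases "i = length is - 1") (auto simp: less_imp_le)
  moreover have "hd is = is ! 0" using assms(2) by (rule hd_conv_nth)
  moreover have "last is = is ! (length is - 1)" using assms(2) by (rule last_conv_nth)
  ultimately show "hd is \<le> x \<and> x \<le> last is" using i(2) by simp
qed


lemma cov1_split:
  assumes "cov1 B {x..y}" "1 \<le> x"
  shows "\<exists>u. u \<in> {x..y} \<and> cov0 B {x..u-1} \<and> cov0 B {u+1..y}"
proof -
  obtain C u where C: "C \<subseteq> B1 B" "\<forall>p\<in>C. \<forall>q\<in>C. p \<noteq> q \<longrightarrow> ival p \<inter> ival q = {}"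
    "u \<notin> \<Union>(ival ` C)" "{x..y} = insert u (\<Union>(ival ` C))"
    using assms(1) unfolding cov1_def by (elim exE conjE) (rule that)
  have mem: "\<And>z. z \<in> {x..y} \<longleftrightarrow> z = u \<or> (\<exists>p\<in>C. z \<in> ival p)" unfolding C(4) by blast
  have u: "u \<in> {x..y}" using mem by blast
  have sideC: "Max p < u \<or> u < Min p" if "p \<in> C" for p
  proof (rule ccontr)
    assume "\<not> (Max p < u \<or> u < Min p)"
    then have "u \<in> ival p" unfolding ival_def by auto
    then show False using C(3) that by auto
  qed
  define C1 where "C1 = {p\<in>C. Max p < u}"
  define C2 where "C2 = {p\<in>C. u < Min p}"
  have e1: "{x..u-1} = \<Union>(ival ` C1)"
  proof
    show "{x..u-1} \<subseteq> \<Union>(ival ` C1)"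
    proof
      fix z assume z: "z \<in> {x..u-1}"
      then have "z \<in> {x..y}" "z \<noteq> u" using u assms(2) by auto
      then obtain p where p: "p \<in> C" "z \<in> ival p" using mem by blast
      have "Max p < u"
      proof (rule ccontr)
        assume "\<not> Max p < u"
        then have "u \<in> ival p" using p z unfolding ival_def by auto
        then show False using C(3) p by auto
      qed
      then show "z \<in> \<Union>(ival ` C1)" using p unfolding C1_def by auto
    qed
  next
    show "\<Union>(ival ` C1) \<subseteq> {x..u-1}"
    proof
      fix z assume "z \<in> \<Union>(ival ` C1)"
      then obtain p where p: "p \<in> C" "Max p < u" "z \<in> ival p" unfolding C1_def by auto
      then have "z \<in> {x..y}" using mem by blast
      then show "z \<in> {x..u-1}" using p unfolding ival_def by auto
    qed
  qed
  have e2: "{u+1..y} = \<Union>(ival ` C2)"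
  proof
    show "{u+1..y} \<subseteq> \<Union>(ival ` C2)"
    proof
      fix z assume z: "z \<in> {u+1..y}"
      then have "z \<in> {x..y}" "z \<noteq> u" using u assms(2) by auto
      then obtain p where p: "p \<in> C" "z \<in> ival p" using mem by blast
      have "u < Min p"
      proof (rule ccontr)
        assume "\<not> u < Min p"
        then have "u \<in> ival p" using p z unfolding ival_def by auto
        then show False using C(3) p by auto
      qed
      then show "z \<in> \<Union>(ival ` C2)" using p unfolding C2_def by auto
    qed
  next
    show "\<Union>(ival ` C2) \<subseteq> {u+1..y}"
    proof
      fix z assume "z \<in> \<Union>(ival ` C2)"
      then obtain p where p: "p \<in> C" "u < Min p" "z \<in> ival p" unfolding C2_def by auto
      then have "z \<in> {x..y}" using mem by blast
      then show "z \<in> {u+1..y}" using p unfolding ival_def by auto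
    qed
  qed
  have "cov0 B {x..u-1}" unfolding cov0_def
  proof (rule exI[of _ C1], intro conjI)
    show "C1 \<subseteq> B1 B" using C(1) unfolding C1_def by blast
    show "\<forall>p\<in>C1. \<forall>q\<in>C1. p \<noteq> q \<longrightarrow> ival p \<inter> ival q = {}" using C(2) unfolding C1_def by blast
  qed (rule e1)
  moreover have "cov0 B {u+1..y}" unfolding cov0_def
  proof (rule exI[of _ C2], intro conjI)
    show "C2 \<subseteq> B1 B" using C(1) unfolding C2_def by blast
    show "\<forall>p\<in>C2. \<forall>q\<in>C2. p \<noteq> q \<longrightarrow> ival p \<inter> ival q = {}" using C(2) unfolding C2_def by blast
  qed (rule e2)
  ultimately show ?thesis using u by blast
qed

lemma set_Suc_split: "{f k |k. k < Suc m} = insert (f 0) {f (Suc j) |j. j < m}"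
  by (auto simp: less_Suc_eq_0_disj)


lemma set_cong_lt: "(\<And>j. j < m \<Longrightarrow> f j = g j) \<Longrightarrow> {f j |j. j < m} = {g j |j. j < m}"
  by (rule Collect_cong) metis

lemma caseI_new:
  assumes oN: "odd N" and pn: "PN N B" and H: "\<forall>p\<in>B1 B. cov0 B {Min p + 1 .. Max p - 1}"
    and ok: "seq_ok N B is" and ne: "is \<noteq> []" and Ns: "N \<notin> supp B"
    and u: "u \<in> {1 .. hd is - 1}" and c1: "cov0 B {1 .. u - 1}" and c2: "cov0 B {u + 1 .. hd is - 1}"
    and c3: "cov0 B {last is + 1 .. N - 1}"
  shows "u \<notin> supp B \<and> u < N \<and> insert {u,N} B \<in> XN1 N"
proof -
  define a where "a = hd is"
  define b where "b = last is"
  define L where "L = length is"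
  have aB: "a \<in> \<Union>(B0 B)" "b \<in> \<Union>(B0 B)" using seq_bounds(1,2)[OF ok ne] a_def b_def by auto
  have bnd: "\<And>x. x \<in> \<Union>(B0 B) \<Longrightarrow> a \<le> x \<and> x \<le> b" using seq_bounds(3)[OF ok ne] a_def b_def by auto
  have setis: "set is \<subseteq> {1..N}" using ok unfolding seq_ok_def by auto
  have sis: "set is = \<Union>(B0 B)" using seq_set[OF ok] .
  have "b \<in> set is" using ne b_def by simp
  then have "b \<le> N" using setis by auto
  moreover have "b \<noteq> N" using aB(2) Ns B0_sub unfolding supp_def by blast
  ultimately have bN: "b < N" by simp
  have ua: "1 \<le> u" "u < a" using u a_def by auto
  have ab: "a \<le> b" using bnd aB(1) by blast
  have uN: "u < N" using ua ab bN by simp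
  have notsupp: "u \<notin> supp B"
  proof
    assume "u \<in> supp B"
    then obtain p where p: "p \<in> B" "u \<in> p" unfolding supp_def by auto
    have pp: "Min p < Max p" "\<forall>x\<in>p. x = Min p \<or> x = Max p" "Min p \<in> p" "Max p \<in> p" "1 \<le> Min p" "Max p \<le> N"
      using pair_props[OF pn p(1)] by auto
    show False
    proof (cases "p \<in> B0 B")
      case True
      then have "a \<le> u" using bnd p(2) by blast
      then show False using ua by simp
    next
      case False
      then have pB1: "p \<in> B1 B" using p(1) unfolding B0_def B1_def by auto
      define q where "q = (if u = Min p then Max p else Min p)"
      have q: "q \<in> p" "q \<noteq> u" "1 \<le> q" "q \<le> N" using pp p(2) unfolding q_def by auto
      have pq: "p = {u, q}" using pp p(2) unfolding q_def by auto
      consider "q < u" | "u < q \<and> q < a" | "q = a" | "a < q" using q(2) by linarith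
      then show False
      proof cases
        case 1
        then have "q \<in> {1..u-1}" using q by auto
        then have "p \<subseteq> {1..u-1}" using cov0_closed[OF pn H c1 _ p(1) q(1)] by blast
        then show False using p(2) ua by auto
      next
        case 2
        then have "q \<in> {u+1..hd is - 1}" using q a_def by auto
        then have "p \<subseteq> {u+1..hd is - 1}" using cov0_closed[OF pn H c2 _ p(1) q(1)] by blast
        then show False using p(2) by auto
      next
        case 3
        obtain P where "P \<in> B0 B" "a \<in> P" using aB(1) by blast
        then show False using B0_B1_clash[OF pn _ pB1, of P a] q(1) 3 by blast
      next
        case 4
        then have "Min p = u" "Max p = q" using pq ua by auto
        then have cv: "cov0 B {u+1..q-1}" using H pB1 by metis
        have "a \<in> {u+1..q-1}" using 4 ua by auto
        then obtain r where r: "r \<in> B1 B" "a \<in> r" using cov0_covered[OF pn H cv] by blast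
        obtain P where "P \<in> B0 B" "a \<in> P" using aB(1) by blast
        then show False using B0_B1_clash[OF pn _ r(1) _ r(2)] by blast
      qed
    qed
  qed
  have "even (card {1..u-1})" using cov0_even[OF pn c1] .
  then have ou: "odd u" using ua by (cases u) auto
  define p0 where "p0 = {u, N}"
  define B' where "B' = insert p0 B"
  have mm: "Min p0 = u" "Max p0 = N" using uN unfolding p0_def by auto
  have p0n: "p0 \<notin> B" using Ns unfolding p0_def supp_def by auto
  have evd: "even (N - u)" using oN ou uN by (simp add: even_diff_nat)
  have sub: "B \<subseteq> B'" unfolding B'_def by auto
  have B0': "B0 B' = insert p0 (B0 B)" unfolding B0_def B'_def using mm evd by auto
  have B1': "B1 B' = B1 B" unfolding B1_def B'_def using mm evd by auto
  have pn': "PN N B'"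
    unfolding PN_def
  proof (intro conjI ballI impI)
    fix p assume "p \<in> B'"
    then show "p \<subseteq> {1..N}" "card p = 2" using pn ua uN unfolding B'_def p0_def PN_def by auto
  next
    fix p q assume pq: "p \<in> B'" "q \<in> B'" "p \<noteq> q"
    show "p \<inter> q = {}"
    proof (cases "p = p0")
      case True
      then have "q \<in> B" using pq unfolding B'_def by auto
      then show ?thesis using True notsupp Ns unfolding p0_def supp_def by auto
    next
      case False
      then have pB: "p \<in> B" using pq unfolding B'_def by auto
      show ?thesis
      proof (cases "q = p0")
        case True
        then show ?thesis using pB notsupp Ns unfolding p0_def supp_def by auto
      next
        case False
        then have "q \<in> B" using pq unfolding B'_def by auto
        then show ?thesis using pB pq(3) pn unfolding PN_def by blast
      qed
    qed
  qed
  define is' where "is' = u # is @ [N]"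
  have ev: "even L" using ok unfolding seq_ok_def L_def by auto
  have Lpos: "0 < L" using ne L_def by simp
  have len: "length is' = L + 2" unfolding is'_def L_def by simp
  have n0: "is' ! 0 = u" unfolding is'_def by simp
  have nS: "\<And>j. j < L \<Longrightarrow> is' ! Suc j = is ! j" unfolding is'_def L_def by (simp add: nth_append)
  have nL: "is' ! Suc L = N" unfolding is'_def L_def by (simp add: nth_append)
  have seq': "seq_ok N B' is'"
    unfolding seq_ok_def
  proof (intro conjI allI impI)
    show "even (length is')" using len ev by simp
    have so: "sorted_wrt (<) is" using ok unfolding seq_ok_def by auto
    have "\<forall>x\<in>set is. u < x \<and> x < N" using sis bnd ua bN by fastforce
    then show "sorted_wrt (<) is'" unfolding is'_def using so uN by (auto simp: sorted_wrt_append)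
    show "set is' \<subseteq> {1..N}" unfolding is'_def using setis ua uN by auto
    have m: "length is' div 2 = Suc (L div 2)" using len by simp
    have B0eq: "B0 B = {{is ! (L - 1 - k), is ! k} | k. k < L div 2}"
      using ok unfolding seq_ok_def L_def by auto
    have "{{is' ! (length is' - 1 - k), is' ! k} |k. k < length is' div 2}
        = insert {is' ! (length is' - 1 - 0), is' ! 0} {{is' ! (length is' - 1 - Suc j), is' ! Suc j} |j. j < L div 2}"
      unfolding m by (rule set_Suc_split)
    also have "{{is' ! (length is' - 1 - Suc j), is' ! Suc j} |j. j < L div 2} = {{is ! (L - 1 - j), is ! j} |j. j < L div 2}"
    proof (rule set_cong_lt)
      fix j assume j: "j < L div 2"
      then have "length is' - 1 - Suc j = Suc (L - 1 - j)" "L - 1 - j < L" "j < L" using len by auto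
      then show "{is' ! (length is' - 1 - Suc j), is' ! Suc j} = {is ! (L - 1 - j), is ! j}" using nS by simp
    qed
    also have "{is' ! (length is' - 1 - 0), is' ! 0} = p0" using len n0 nL unfolding p0_def by auto
    finally show "B0 B' = {{is' ! (length is' - 1 - k), is' ! k} |k. k < length is' div 2}"
      using B0' B0eq by simp
  next
    fix k assume k: "k + 1 < length is' div 2"
    show "cov0 B' {is' ! k + 1 .. is' ! (k + 1) - 1}"
    proof (cases k)
      case 0
      have "is' ! 1 = a" using nS[of 0] Lpos a_def ne by (simp add: hd_conv_nth)
      then show ?thesis using 0 n0 cov0_mono[OF sub c2] a_def by simp
    next
      case (Suc j)
      then have j: "j + 1 < L div 2" using k len by simp
      then have "cov0 B {is ! j + 1 .. is ! (j + 1) - 1}" using ok unfolding seq_ok_def L_def by blast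
      moreover have "is' ! k = is ! j" "is' ! (k+1) = is ! (j+1)" using Suc nS j by auto
      ultimately show ?thesis using cov0_mono[OF sub] by simp
    qed
  next
    fix k assume k: "length is' div 2 \<le> k \<and> k + 1 < length is'"
    then obtain j where Suc: "k = Suc j" using len by (cases k) auto
    then have j: "L div 2 \<le> j" "j < L" using k len by auto
    show "cov0 B' {is' ! k + 1 .. is' ! (k + 1) - 1}"
    proof (cases "j + 1 < L")
      case True
      then have "cov0 B {is ! j + 1 .. is ! (j + 1) - 1}" using ok j unfolding seq_ok_def L_def by blast
      moreover have "is' ! k = is ! j" "is' ! (k+1) = is ! (j+1)" using Suc nS j True by auto
      ultimately show ?thesis using cov0_mono[OF sub] by simp
    next
      case False
      then have "j = L - 1" using j by simp
      then have "is' ! k = b" "is' ! (k+1) = N" using Suc nS[of "L-1"] nL Lpos b_def ne L_def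
        by (auto simp: last_conv_nth)
      then show ?thesis using cov0_mono[OF sub c3] b_def by simp
    qed
  qed
  have ist: "istar N B' = is'" using istar_eq[OF seq'] .
  have st': "starP N B'" unfolding starP_def
    using pn' seq' B1' H cov0_mono[OF sub] by auto
  have "condI N B'" unfolding condI_def ist
    using cov0_mono[OF sub c1] cov0_empty[of B'] unfolding is'_def by simp
  then have "B' \<in> XN1 N" using st' unfolding XN1_def by simp
  then show ?thesis using notsupp uN unfolding B'_def p0_def by simp
qed


lemma PN_insert:
  assumes pn: "PN N B" and u: "1 \<le> u" "u < N" and notsupp: "u \<notin> supp B" and Ns: "N \<notin> supp B"
  shows "PN N (insert {u,N} B)"
proof -
  have A: "\<forall>p\<in>B. p \<subseteq> {1..N} \<and> card p = 2" using pn unfolding PN_def by (rule conjunct1)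
  have D: "\<forall>p\<in>B. \<forall>q\<in>B. p \<noteq> q \<longrightarrow> p \<inter> q = {}" using pn unfolding PN_def by (rule conjunct2)
  have nq: "u \<notin> q \<and> N \<notin> q" if "q \<in> B" for q using notsupp Ns that unfolding supp_def by blast
  have A': "\<forall>p\<in>insert {u,N} B. p \<subseteq> {1..N} \<and> card p = 2"
  proof
    fix p assume "p \<in> insert {u,N} B"
    then consider "p = {u,N}" | "p \<in> B" by blast
    then show "p \<subseteq> {1..N} \<and> card p = 2"
    proof cases
      case 1 then show ?thesis using u by simp
    next
      case 2 then show ?thesis using A by blast
    qed
  qed
  have D': "\<forall>p\<in>insert {u,N} B. \<forall>q\<in>insert {u,N} B. p \<noteq> q \<longrightarrow> p \<inter> q = {}"
  proof (intro ballI impI)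
    fix p q assume pq: "p \<in> insert {u,N} B" "q \<in> insert {u,N} B" "p \<noteq> q"
    show "p \<inter> q = {}"
    proof (cases "p = {u,N}")
      case True
      then have "q \<in> B" using pq by blast
      then show ?thesis using True nq by simp
    next
      case False
      then have pB: "p \<in> B" using pq by blast
      show ?thesis
      proof (cases "q = {u,N}")
        case True
        then show ?thesis using pB nq by simp
      next
        case False
        then have "q \<in> B" using pq by blast
        then show ?thesis using pB pq(3) D by blast
      qed
    qed
  qed
  show ?thesis unfolding PN_def using A' D' by (rule conjI)
qed

lemma caseII_new:
  assumes oN: "odd N" and pn: "PN N B" and H: "\<forall>p\<in>B1 B. cov0 B {Min p + 1 .. Max p - 1}"
    and ok: "seq_ok N B is" and ne: "is \<noteq> []" and Ns: "N \<notin> supp B"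
    and u: "u \<in> {last is + 1 .. N - 1}" and c0: "cov0 B {1 .. hd is - 1}"
    and c1: "cov0 B {last is + 1 .. u - 1}" and c2: "cov0 B {u + 1 .. N - 1}"
  shows "u \<notin> supp B \<and> u < N \<and> insert {u,N} B \<in> XN1 N"
proof -
  define a where "a = hd is"
  define b where "b = last is"
  have aB: "a \<in> \<Union>(B0 B)" "b \<in> \<Union>(B0 B)" using seq_bounds(1,2)[OF ok ne] a_def b_def by auto
  have bnd: "\<And>x. x \<in> \<Union>(B0 B) \<Longrightarrow> a \<le> x \<and> x \<le> b" using seq_bounds(3)[OF ok ne] a_def b_def by auto
  have ub: "b < u" "u < N" "1 \<le> u" using u b_def by auto
  have notsupp: "u \<notin> supp B"
  proof
    assume "u \<in> supp B"
    then obtain p where p: "p \<in> B" "u \<in> p" unfolding supp_def by auto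
    have pp: "Min p < Max p" "\<forall>x\<in>p. x = Min p \<or> x = Max p" "Min p \<in> p" "Max p \<in> p" "1 \<le> Min p" "Max p \<le> N"
      using pair_props[OF pn p(1)] by auto
    show False
    proof (cases "p \<in> B0 B")
      case True
      then have "u \<le> b" using bnd p(2) by blast
      then show False using ub by simp
    next
      case False
      then have pB1: "p \<in> B1 B" using p(1) unfolding B0_def B1_def by auto
      define q where "q = (if u = Min p then Max p else Min p)"
      have q: "q \<in> p" "q \<noteq> u" "1 \<le> q" "q \<le> N" using pp p(2) unfolding q_def by auto
      have pq: "p = {u, q}" using pp p(2) unfolding q_def by auto
      have qN: "q \<noteq> N" using Ns p(1) q(1) unfolding supp_def by auto
      consider "u < q" | "b < q \<and> q < u" | "q = b" | "q < b" using q(2) by linarith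
      then show False
      proof cases
        case 1
        then have "q \<in> {u+1..N-1}" using q qN by auto
        then have "p \<subseteq> {u+1..N-1}" using cov0_closed[OF pn H c2 _ p(1) q(1)] by blast
        then show False using p(2) by auto
      next
        case 2
        then have "q \<in> {last is + 1..u - 1}" using q b_def by auto
        then have "p \<subseteq> {last is + 1..u - 1}" using cov0_closed[OF pn H c1 _ p(1) q(1)] by blast
        then have "u \<le> u - 1" using p(2) by auto
        then show False using ub by simp
      next
        case 3
        obtain P where "P \<in> B0 B" "b \<in> P" using aB(2) by blast
        then show False using B0_B1_clash[OF pn _ pB1, of P b] q(1) 3 by blast
      next
        case 4
        then have "Min p = q" "Max p = u" using pq ub by auto
        then have cv: "cov0 B {q+1..u-1}" using H pB1 by metis
        have "b \<in> {q+1..u-1}" using 4 ub by auto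
        then obtain r where r: "r \<in> B1 B" "b \<in> r" using cov0_covered[OF pn H cv] by blast
        obtain P where "P \<in> B0 B" "b \<in> P" using aB(2) by blast
        then show False using B0_B1_clash[OF pn _ r(1) _ r(2)] by blast
      qed
    qed
  qed
  have "even (card {u+1..N-1})" using cov0_even[OF pn c2] .
  then have "even (N - Suc u)" by simp
  then have eu: "even u" using oN ub by (simp add: even_diff_nat)
  define p0 where "p0 = {u, N}"
  define B' where "B' = insert p0 B"
  have mm: "Min p0 = u" "Max p0 = N" using ub unfolding p0_def by auto
  have od: "odd (N - u)" using oN eu ub by (simp add: even_diff_nat)
  have sub: "B \<subseteq> B'" unfolding B'_def by auto
  have B0': "B0 B' = B0 B" unfolding B0_def B'_def using mm od by auto
  have p0B1: "p0 \<in> B1 B'" unfolding B1_def B'_def using mm od by auto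
  have B1': "B1 B' = insert p0 (B1 B)" unfolding B1_def B'_def using mm od by auto
  have pn': "PN N B'" unfolding B'_def p0_def using PN_insert[OF pn ub(3) ub(2) notsupp Ns] .
  have seq': "seq_ok N B' is"
    unfolding seq_ok_def B0'
  proof (intro conjI allI impI)
    show "even (length is)" "sorted_wrt (<) is" "set is \<subseteq> {1..N}"
      "B0 B = {{is ! (length is - 1 - k), is ! k} |k. k < length is div 2}"
      using ok unfolding seq_ok_def by auto
  next
    fix k assume "k + 1 < length is div 2"
    then have "cov0 B {is ! k + 1..is ! (k + 1) - 1}" using ok unfolding seq_ok_def by blast
    then show "cov0 B' {is ! k + 1..is ! (k + 1) - 1}" using cov0_mono[OF sub] by blast
  next
    fix k assume "length is div 2 \<le> k \<and> k + 1 < length is"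
    then have "cov0 B {is ! k + 1..is ! (k + 1) - 1}" using ok unfolding seq_ok_def by blast
    then show "cov0 B' {is ! k + 1..is ! (k + 1) - 1}" using cov0_mono[OF sub] by blast
  qed
  have ist: "istar N B' = is" using istar_eq[OF seq'] .
  have Hp0: "cov0 B' {Min p0 + 1 .. Max p0 - 1}" using mm cov0_mono[OF sub c2] by simp
  have H': "\<forall>p\<in>B1 B'. cov0 B' {Min p + 1 .. Max p - 1}"
    unfolding B1' using Hp0 H cov0_mono[OF sub] by blast
  have st': "starP N B'" unfolding starP_def using pn' seq' H' by blast
  have "ival p0 = {u..N}" unfolding ival_def mm ..
  then have cu: "cov0 B' {u..N}" using cov0_ival[OF p0B1] by simp
  have "{b+1..N} = {b+1..u-1} \<union> {u..N}" "{b+1..u-1} \<inter> {u..N} = {}" using ub by auto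
  then have cb: "cov0 B' {b+1..N}" using cov0_union[OF pn' cov0_mono[OF sub c1[folded b_def]] cu] by simp
  have "condI N B'" unfolding condI_def ist
    using cov0_mono[OF sub c0] cb b_def by simp
  then have "B' \<in> XN1 N" using st' unfolding XN1_def by simp
  then show ?thesis using notsupp ub unfolding B'_def p0_def by simp
qed


lemma fsum2_insert:
  assumes "finite B" "p \<notin> B"
  shows "fsum2 f (insert p B) = sdiff2 (fsum2 f B) (f p)"
proof -
  have "odd (card {q \<in> insert p B. x \<in> f q}) \<longleftrightarrow>
        (odd (card {q \<in> B. x \<in> f q}) \<noteq> (x \<in> f p))" for x
  proof (cases "x \<in> f p")
    case True
    then have "{q \<in> insert p B. x \<in> f q} = insert p {q \<in> B. x \<in> f q}" by auto
    moreover have "finite {q \<in> B. x \<in> f q}" using assms(1) by simp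
    moreover have "p \<notin> {q \<in> B. x \<in> f q}" using assms(2) by simp
    ultimately show ?thesis using True by simp
  next
    case False
    then have "{q \<in> insert p B. x \<in> f q} = {q \<in> B. x \<in> f q}" by auto
    then show ?thesis using False by simp
  qed
  then show ?thesis unfolding fsum2_def sdiff2_def by auto
qed

lemma sdiff2_assoc: "X \<inter> Y = {} \<Longrightarrow> sdiff2 (sdiff2 E X) Y = sdiff2 E (X \<union> Y)"
  unfolding sdiff2_def by auto

lemma span2_mono: "B \<subseteq> B' \<Longrightarrow> span2 B \<subseteq> span2 B'"
  unfolding span2_def by blast

lemma uB_unique_I:
  assumes pn: "PN N B" and H: "\<forall>p\<in>B1 B. cov0 B {Min p + 1 .. Max p - 1}"
    and ns: "\<And>u. P u \<Longrightarrow> u \<notin> supp B"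
    and Pdef: "\<And>u. P u \<Longrightarrow> u \<in> {x .. y} \<and> cov0 B {x .. u - 1} \<and> cov0 B {u + 1 .. y}"
    and x1: "1 \<le> x"
    and Pu: "P u" and Pv: "P v"
  shows "u = v"
proof (rule ccontr)
  assume "u \<noteq> v"
  then consider "u < v" | "v < u" by linarith
  then show False
  proof cases
    case 1
    have cv: "cov0 B {x .. v - 1}" using Pdef[OF Pv] by blast
    have "u \<in> {x .. v - 1}" using Pdef[OF Pu] 1 by auto
    then obtain r where "r \<in> B1 B" "u \<in> r" using cov0_covered[OF pn H cv] by blast
    then have "u \<in> supp B" unfolding supp_def using B1_sub by blast
    then show False using ns[OF Pu] by blast
  next
    case 2
    have cv: "cov0 B {x .. u - 1}" using Pdef[OF Pu] by blast
    have "v \<in> {x .. u - 1}" using Pdef[OF Pv] 2 by auto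
    then obtain r where "r \<in> B1 B" "v \<in> r" using cov0_covered[OF pn H cv] by blast
    then have "v \<in> supp B" unfolding supp_def using B1_sub by blast
    then show False using ns[OF Pv] by blast
  qed
qed

lemma phi_add:
  assumes oN: "odd N" and XB: "B \<in> XN2p N" and c: "card (B0 B) \<noteq> 0"
  shows "uB N B < N \<and> uB N B \<notin> supp B \<and> N \<notin> supp B \<and> insert {uB N B, N} B \<in> XN1 N"
proof -
  have st: "starP N B" and c2: "condII N B" using XB unfolding XN2p_def by auto
  have pn: "PN N B" and H: "\<forall>p\<in>B1 B. cov0 B {Min p + 1 .. Max p - 1}" using st unfolding starP_def by auto
  define is0 where "is0 = istar N B"
  have ok: "seq_ok N B is0" using istar_ok[OF st] is0_def by simp
  have s0: "sB N B \<noteq> 0" using sB_card[OF st] c by simp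
  then have ne: "is0 \<noteq> []" using is0_def by auto
  have Ns: "N \<notin> supp B" and cs: "caseI N B \<or> caseII N B" using c2 s0 unfolding condII_def by auto
  show ?thesis
  proof (cases "caseI N B")
    case True
    define P where "P u \<longleftrightarrow> u \<in> {1 .. hd is0 - 1} \<and> cov0 B {1 .. u - 1} \<and> cov0 B {u + 1 .. hd is0 - 1}" for u
    have cI: "cov1 B {1 .. hd is0 - 1}" "cov0 B {last is0 + 1 .. N - 1}" using True unfolding caseI_def is0_def by auto
    have key: "P u \<Longrightarrow> u \<notin> supp B \<and> u < N \<and> insert {u,N} B \<in> XN1 N" for u
      unfolding P_def using caseI_new[OF oN pn H ok ne Ns _ _ _ cI(2), of u] by blast
    obtain u0 where u0: "P u0" using cov1_split[OF cI(1)] unfolding P_def by auto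
    have uq: "v = u0" if Pv: "P v" for v
    proof -
      have ns: "\<And>u. P u \<Longrightarrow> u \<notin> supp B" using key by blast
      have pd: "\<And>u. P u \<Longrightarrow> u \<in> {1 .. hd is0 - 1} \<and> cov0 B {1 .. u - 1} \<and> cov0 B {u + 1 .. hd is0 - 1}"
        unfolding P_def by blast
      have one: "(1::nat) \<le> 1" by simp
      show "v = u0" using uB_unique_I[OF pn H ns pd one Pv u0] .
    qed
    have "uB N B = (THE u. P u)" unfolding uB_def P_def is0_def using True by simp
    also have "\<dots> = u0" by (rule the_equality[of P u0, OF u0 uq])
    finally show ?thesis using key[OF u0] Ns by simp
  next
    case False
    then have cII: "caseII N B" using cs by simp
    define P where "P u \<longleftrightarrow> u \<in> {last is0 + 1 .. N - 1} \<and> cov0 B {last is0 + 1 .. u - 1} \<and> cov0 B {u + 1 .. N - 1}" for u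
    have cc: "cov0 B {1 .. hd is0 - 1}" "cov1 B {last is0 + 1 .. N - 1}" using cII unfolding caseII_def is0_def by auto
    have key: "P u \<Longrightarrow> u \<notin> supp B \<and> u < N \<and> insert {u,N} B \<in> XN1 N" for u
      unfolding P_def using caseII_new[OF oN pn H ok ne Ns _ cc(1), of u] by blast
    obtain u0 where u0: "P u0" using cov1_split[OF cc(2)] unfolding P_def by auto
    have uq: "v = u0" if Pv: "P v" for v
    proof -
      have ns: "\<And>u. P u \<Longrightarrow> u \<notin> supp B" using key by blast
      have pd: "\<And>u. P u \<Longrightarrow> u \<in> {last is0 + 1 .. N - 1} \<and> cov0 B {last is0 + 1 .. u - 1} \<and> cov0 B {u + 1 .. N - 1}"
        unfolding P_def by blast
      have one: "1 \<le> last is0 + 1" by simp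
      show "v = u0" using uB_unique_I[OF pn H ns pd one Pv u0] .
    qed
    have "uB N B = (THE u. P u)" unfolding uB_def P_def is0_def using False by simp
    also have "\<dots> = u0" by (rule the_equality[of P u0, OF u0 uq])
    finally show ?thesis using key[OF u0] Ns by simp
  qed
qed

lemma phi_props:
  assumes oN: "odd N" and XB: "B \<in> XN2 N"
  shows "phi N B \<in> XN1 N \<and> eps N (phi N B) = eps' N B \<and> B \<subseteq> phi N B"
proof (cases "B \<in> XN2m N \<or> card (B0 B) = 0")
  case True
  then have e1: "phi N B = B" "eps' N B = eps N B" unfolding phi_def eps'_def by auto
  have "B \<in> XN1 N"
  proof (cases "B \<in> XN2m N")
    case True
    then show ?thesis unfolding XN2m_def XN1_def condIII_def by auto
  next
    case False
    then have "B \<in> XN2p N" "card (B0 B) = 0" using XB True unfolding XN2_def by auto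
    then have st: "starP N B" unfolding XN2p_def by auto
    then have "sB N B = 0" using sB_card[OF st] \<open>card (B0 B) = 0\<close> by simp
    then show ?thesis using st unfolding XN1_def condI_def by auto
  qed
  then show ?thesis using e1 by simp
next
  case False
  then have Bp: "B \<in> XN2p N" and c: "card (B0 B) \<noteq> 0" "B \<notin> XN2m N" using XB unfolding XN2_def by auto
  define u where "u = uB N B"
  have ph: "phi N B = insert {u, N} B" unfolding phi_def u_def using False by simp
  have pr: "u < N" "u \<notin> supp B" "N \<notin> supp B" "insert {u, N} B \<in> XN1 N"
    using phi_add[OF oN Bp c(1)] u_def by auto
  have pn: "PN N B" using Bp unfolding XN2p_def starP_def by auto
  have nin: "{u, N} \<notin> B" using pr(3) unfolding supp_def by auto
  have epsI: "eps N (insert {u, N} B) = sdiff2 (eps N B) (brk N {u, N})"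
    unfolding eps_def by (rule fsum2_insert[OF PN_finite[OF pn] nin])
  have mm: "Min {u, N} = u" "Max {u, N} = N" using pr(1) by auto
  have "eps' N B = (if even u then sdiff2 (eps N B) {u .. N} else sdiff2 (sdiff2 (eps N B) {N}) {1 .. u})"
    unfolding eps'_def u_def using False by simp
  also have "\<dots> = sdiff2 (eps N B) (brk N {u, N})"
  proof (cases "even u")
    case True
    then have "odd (N - u)" using oN pr(1) by (simp add: even_diff_nat)
    then show ?thesis using True unfolding brk_def mm by simp
  next
    case F: False
    then have "even (N - u)" using oN pr(1) by (simp add: even_diff_nat)
    moreover have "{N} \<inter> {1..u} = {}" using pr(1) by auto
    ultimately show ?thesis using F sdiff2_assoc[of "{N}" "{1..u}" "eps N B"] unfolding brk_def mm
      by simp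
  qed
  finally show ?thesis using ph pr(4) epsI by auto
qed

theorem mainTheorem3:
  fixes N :: nat and B B' :: "nat set set"
  assumes "odd N" and "N \<ge> 3"
    and "B' \<in> XN2 N" and "B \<in> XN2 N"
    and "preceq N B' B"
  shows "leq1 N (phi N B') (phi N B)"
proof -
  have "(\<lambda>X Y. X \<in> XN2 N \<and> Y \<in> XN2 N \<and> eps' N X \<in> span2 Y)\<^sup>*\<^sup>* B' B"
    using assms(5) unfolding preceq_def .
  then show ?thesis
  proof (induction rule: rtranclp_induct)
    case base
    then show ?case unfolding leq1_def by simp
  next
    case (step y z)
    have yz: "y \<in> XN2 N" "z \<in> XN2 N" "eps' N y \<in> span2 z" using step(2) by simp_all
    have py: "phi N y \<in> XN1 N \<and> eps N (phi N y) = eps' N y \<and> y \<subseteq> phi N y"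
      using phi_props[OF assms(1) yz(1)] .
    have pz: "phi N z \<in> XN1 N \<and> eps N (phi N z) = eps' N z \<and> z \<subseteq> phi N z"
      using phi_props[OF assms(1) yz(2)] .
    have sm: "span2 z \<subseteq> span2 (phi N z)" using pz by (intro span2_mono) simp
    have "eps N (phi N y) = eps' N y" using py by simp
    then have "eps N (phi N y) \<in> span2 (phi N z)" using yz(3) sm by auto
    then have "(\<lambda>X Y. X \<in> XN1 N \<and> Y \<in> XN1 N \<and> eps N X \<in> span2 Y) (phi N y) (phi N z)"
      using py pz by simp
    then show ?case using step(3) unfolding leq1_def by (rule rtranclp.rtrancl_into_rtrancl[rotated])
  qed
qed

end
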